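(* Let $$g_t(x) = x^3 + 147(t^2 + 13t + 49)x^2 + 147(t^2 + 13t + 49)(33t^2 + 637t + 2401)x + 49(t^2 + 13t + 49)(881t^4 + 38122t^3 + 525819t^2 + 3058874t + 5764801)\in\mathbb{Q}(t)[x].$$ Then $g_t$ parametrizes all cyclic cubic extensions of $\mathbb{Q}$: for every Galois extension $L/\mathbb{Q}$ with $\mathrm{Gal}(L/\mathbb{Q})\cong\mathbb{Z}/3\mathbb{Z}$ there exists $t\in\mathbb{Q}$ such that $L$ is the splitting field of $g_t(x)$ over $\mathbb{Q}$.
   Context: $g_t(x)$ is (up to defining the same field) the cubic factor of the $7$-division polynomial of the family $\mathcal{E}_t\colon y^2 = x^3 - 27(t^2+13t+49)^3(t^2+245t+2401)x + 54(t^2+13t+49)^4(t^4-490t^3-21609t^2-235298t-823543)$ of elliptic curves with a rational $7$-isogeny; it defines the field of $x$-coordinates of a generator of the kernel of that isogeny. *)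

theory Defs
  imports "HOL-Algebra.Elementary_Groups" "HOL-Computational_Algebra.Polynomial"
begin

text \<open>Number fields are modelled as subfields of the complex numbers.\<close>

definition subfield_C :: "complex set \<Rightarrow> bool" where
  "subfield_C L \<longleftrightarrow> 0 \<in> L \<and> 1 \<in> L \<and>
     (\<forall>x\<in>L. \<forall>y\<in>L. x + y \<in> L \<and> x * y \<in> L) \<and>
     (\<forall>x\<in>L. - x \<in> L \<and> inverse x \<in> L)"

definition Q_dim :: "complex set \<Rightarrow> nat \<Rightarrow> bool" where
  "Q_dim L n \<longleftrightarrow> (\<exists>b :: nat \<Rightarrow> complex. (\<forall>i<n. b i \<in> L) \<and>
     (\<forall>x\<in>L. \<exists>c. (\<forall>i<n. c i \<in> \<rat>) \<and> x = (\<Sum>i<n. c i * b i)) \<and>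
     (\<forall>c. (\<forall>i<n. c i \<in> \<rat>) \<and> (\<Sum>i<n. c i * b i) = 0 \<longrightarrow> (\<forall>i<n. c i = 0)))"

text \<open>Field automorphisms of L (automatically Q-linear), as extensional maps.\<close>
definition Aut_C :: "complex set \<Rightarrow> (complex \<Rightarrow> complex) set" where
  "Aut_C L = {\<sigma>. bij_betw \<sigma> L L \<and> (\<forall>x\<in>L. \<forall>y\<in>L. \<sigma> (x + y) = \<sigma> x + \<sigma> y \<and>
       \<sigma> (x * y) = \<sigma> x * \<sigma> y) \<and> \<sigma> 1 = 1 \<and> (\<forall>x. x \<notin> L \<longrightarrow> \<sigma> x = x)}"

definition Gal_C :: "complex set \<Rightarrow> (complex \<Rightarrow> complex) monoid" where
  "Gal_C L = \<lparr>carrier = Aut_C L, monoid.mult = (\<lambda>\<sigma> \<tau>. \<sigma> \<circ> \<tau>), one = id\<rparr>"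

definition galois_over_Q :: "complex set \<Rightarrow> bool" where
  "galois_over_Q L \<longleftrightarrow> subfield_C L \<and> (\<exists>n. Q_dim L n \<and> card (Aut_C L) = n)"

definition splitting_field_Q :: "rat poly \<Rightarrow> complex set" where
  "splitting_field_Q p = \<Inter>{K. subfield_C K \<and> {z. poly (map_poly of_rat p) z = 0} \<subseteq> K}"

definition g_poly :: "rat \<Rightarrow> rat poly" where
  "g_poly t = (let s = t^2 + 13*t + 49 in
     [: 49 * s * (881*t^4 + 38122*t^3 + 525819*t^2 + 3058874*t + 5764801),
        147 * s * (33*t^2 + 637*t + 2401),
        147 * s,
        1 :])"

end

theory Submission imports Defs begin

section \<open>Subfields\<close>

lemma sf_basic:
  assumes "subfield_C K"
  shows "0 \<in> K" "1 \<in> K" "x \<in> K \<Longrightarrow> y \<in> K \<Longrightarrow> x + y \<in> K"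
    "x \<in> K \<Longrightarrow> y \<in> K \<Longrightarrow> x * y \<in> K" "x \<in> K \<Longrightarrow> - x \<in> K"
    "x \<in> K \<Longrightarrow> inverse x \<in> K"
  using assms unfolding subfield_C_def by auto

lemma sf_diff: "subfield_C K \<Longrightarrow> x \<in> K \<Longrightarrow> y \<in> K \<Longrightarrow> x - y \<in> K"
  by (metis sf_basic(3) sf_basic(5) diff_conv_add_uminus)

lemma sf_divide: "subfield_C K \<Longrightarrow> x \<in> K \<Longrightarrow> y \<in> K \<Longrightarrow> x / y \<in> K"
  by (metis sf_basic(4) sf_basic(6) divide_inverse)

lemma sf_of_nat: "subfield_C K \<Longrightarrow> of_nat n \<in> K"
  by (induction n) (auto intro: sf_basic)

lemma sf_of_int: "subfield_C K \<Longrightarrow> of_int n \<in> K"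
proof (cases "n \<ge> 0")
  case True
  assume "subfield_C K"
  then show ?thesis using True sf_of_nat[of K "nat n"] by simp
next
  case False
  assume "subfield_C K"
  then show ?thesis using False sf_of_nat[of K "nat (-n)"] sf_basic(5)[of K "of_nat (nat (-n))"] by simp
qed

lemma sf_of_rat: assumes "subfield_C K" shows "of_rat q \<in> K"
proof -
  obtain a b where "q = Fract a b" "b > 0" by (cases q) auto
  then have "of_rat q = (of_int a / of_int b :: complex)" by (simp add: of_rat_rat)
  then show ?thesis using sf_divide[OF assms sf_of_int[OF assms] sf_of_int[OF assms]] by simp
qed

lemma sf_power: "subfield_C K \<Longrightarrow> x \<in> K \<Longrightarrow> x ^ n \<in> K"
  by (induction n) (auto intro: sf_basic)

section \<open>Q-vector space structure\<close>

interpretation Qv: vector_space "\<lambda>(r::rat) (z::complex). of_rat r * z"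
  by unfold_locales (simp_all add: algebra_simps of_rat_add of_rat_mult)

lemma Qdim_span:
  assumes "Q_dim L 3"
  obtains B where "finite B" "card B \<le> 3" "L \<subseteq> Qv.span B"
proof -
  have "\<exists>b. \<forall>x\<in>L. \<exists>c. (\<forall>i<(3::nat). c i \<in> \<rat>) \<and> x = (\<Sum>i<3. c i * b i)"
    using assms unfolding Q_dim_def by (elim exE conjE) (rule exI, assumption)
  then obtain b where b: "\<forall>x\<in>L. \<exists>c. (\<forall>i<(3::nat). c i \<in> \<rat>) \<and> x = (\<Sum>i<3. c i * b i)"
    by (rule exE)
  have "L \<subseteq> Qv.span (b ` {..<(3::nat)})"
  proof
    fix x assume "x \<in> L"
    then obtain c where c: "\<forall>i<3. c i \<in> \<rat>" "x = (\<Sum>i<3. c i * b i)" using b by blast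
    have "c i * b i \<in> Qv.span (b ` {..<(3::nat)})" if "i \<in> {..<(3::nat)}" for i
    proof -
      have "c i \<in> \<rat>" using c(1) that by simp
      then obtain r where r: "c i = of_rat r" by (rule Rats_cases)
      have "b i \<in> Qv.span (b ` {..<(3::nat)})" using that by (intro Qv.span_base) simp
      from Qv.span_scale[OF this, of r] show ?thesis unfolding r .
    qed
    then show "x \<in> Qv.span (b ` {..<(3::nat)})" unfolding c(2) by (intro Qv.span_sum) auto
  qed
  moreover have "card (b ` {..<(3::nat)}) \<le> 3" using card_image_le[of "{..<3::nat}" b] by simp
  ultimately show ?thesis using that by blast
qed

lemma dep4:
  assumes "Q_dim L 3" "a1 \<in> L" "a2 \<in> L" "a3 \<in> L" "a4 \<in> L"
  shows "\<exists>c1 c2 c3 c4 :: rat. (c1 \<noteq> 0 \<or> c2 \<noteq> 0 \<or> c3 \<noteq> 0 \<or> c4 \<noteq> 0) \<and>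
     of_rat c1 * a1 + of_rat c2 * a2 + of_rat c3 * a3 + of_rat c4 * a4 = 0"
proof (cases "distinct [a1,a2,a3,a4]")
  case True
  obtain B where B: "finite B" "card B \<le> 3" "L \<subseteq> Qv.span B" using Qdim_span[OF assms(1)] by blast
  let ?S = "{a1,a2,a3,a4}"
  have cS: "card ?S = 4" using True by simp
  have "Qv.dependent ?S"
  proof (rule ccontr)
    assume "\<not> Qv.dependent ?S"
    then have "card ?S \<le> card B" using Qv.independent_span_bound[OF B(1)] B(3) assms(2-5) by blast
    then show False using cS B(2) by simp
  qed
  then obtain u where u: "\<exists>v\<in>?S. u v \<noteq> 0" "(\<Sum>v\<in>?S. of_rat (u v) * v) = 0"
    using Qv.dependent_finite[of ?S] by auto
  have "(\<Sum>v\<in>?S. of_rat (u v) * v) = of_rat (u a1) * a1 + of_rat (u a2) * a2 + of_rat (u a3) * a3 + of_rat (u a4) * a4"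
    using True by (simp add: algebra_simps)
  then show ?thesis using u by (intro exI[of _ "u a1"] exI[of _ "u a2"] exI[of _ "u a3"] exI[of _ "u a4"]) auto
next
  case False
  then have "a1 = a2 \<or> a1 = a3 \<or> a1 = a4 \<or> a2 = a3 \<or> a2 = a4 \<or> a3 = a4" by auto
  then show ?thesis
  proof (elim disjE)
    assume "a1 = a2" then show ?thesis by (intro exI[of _ 1] exI[of _ "-1"] exI[of _ 0] exI[of _ 0]) (simp add: of_rat_minus)
  next
    assume "a1 = a3" then show ?thesis by (intro exI[of _ 1] exI[of _ 0] exI[of _ "-1"] exI[of _ 0]) (simp add: of_rat_minus)
  next
    assume "a1 = a4" then show ?thesis by (intro exI[of _ 1] exI[of _ 0] exI[of _ 0] exI[of _ "-1"]) (simp add: of_rat_minus)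
  next
    assume "a2 = a3" then show ?thesis by (intro exI[of _ 0] exI[of _ 1] exI[of _ "-1"] exI[of _ 0]) (simp add: of_rat_minus)
  next
    assume "a2 = a4" then show ?thesis by (intro exI[of _ 0] exI[of _ 1] exI[of _ 0] exI[of _ "-1"]) (simp add: of_rat_minus)
  next
    assume "a3 = a4" then show ?thesis by (intro exI[of _ 0] exI[of _ 0] exI[of _ 1] exI[of _ "-1"]) (simp add: of_rat_minus)
  qed
qed


lemma vander3:
  fixes x1 x2 x3 a b c :: complex
  assumes "x1 \<noteq> x2" "x2 \<noteq> x3" "x1 \<noteq> x3"
    and "a + b*x1 + c*x1^2 = 0" "a + b*x2 + c*x2^2 = 0" "a + b*x3 + c*x3^2 = 0"
  shows "a = 0 \<and> b = 0 \<and> c = 0"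
proof -
  have "(x1 - x2) * (b + c*(x1 + x2)) = (a + b*x1 + c*x1^2) - (a + b*x2 + c*x2^2)"
    by (simp add: algebra_simps power2_eq_square)
  then have e12: "b + c*(x1+x2) = 0" using assms(1,4,5) by simp
  have "(x1 - x3) * (b + c*(x1 + x3)) = (a + b*x1 + c*x1^2) - (a + b*x3 + c*x3^2)"
    by (simp add: algebra_simps power2_eq_square)
  then have e13: "b + c*(x1+x3) = 0" using assms(3,4,6) by simp
  have "c * (x2 - x3) = (b + c*(x1+x2)) - (b + c*(x1+x3))" by (simp add: algebra_simps)
  then have "c = 0" using assms(2) e12 e13 by simp
  then show ?thesis using e12 assms(4) by simp
qed

lemma cubic_factor:
  fixes a b c r1 r2 r3 z :: complex
  assumes "r1 \<noteq> r2" "r2 \<noteq> r3" "r1 \<noteq> r3"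
    and "r1^3 + a*r1^2 + b*r1 + c = 0" "r2^3 + a*r2^2 + b*r2 + c = 0" "r3^3 + a*r3^2 + b*r3 + c = 0"
  shows "z^3 + a*z^2 + b*z + c = (z - r1)*(z - r2)*(z - r3)"
proof -
  have "(r1 - r2) * (r1^2+r1*r2+r2^2 + a*(r1+r2) + b) = (r1^3 + a*r1^2 + b*r1 + c) - (r2^3 + a*r2^2 + b*r2 + c)"
    by (simp add: algebra_simps power2_eq_square power3_eq_cube)
  then have e12: "r1^2+r1*r2+r2^2 + a*(r1+r2) + b = 0" using assms(1,4,5) by simp
  have "(r1 - r3) * (r1^2+r1*r3+r3^2 + a*(r1+r3) + b) = (r1^3 + a*r1^2 + b*r1 + c) - (r3^3 + a*r3^2 + b*r3 + c)"
    by (simp add: algebra_simps power2_eq_square power3_eq_cube)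
  then have e13: "r1^2+r1*r3+r3^2 + a*(r1+r3) + b = 0" using assms(3,4,6) by simp
  have "(r2 - r3) * (r1 + r2 + r3 + a) = (r1^2+r1*r2+r2^2 + a*(r1+r2) + b) - (r1^2+r1*r3+r3^2 + a*(r1+r3) + b)"
    by (simp add: algebra_simps power2_eq_square)
  then have "r1 + r2 + r3 + a = 0" using assms(2) e12 e13 by simp
  moreover have "a = (r1 + r2 + r3 + a) - (r1+r2+r3)" by simp
  ultimately have A: "a = -(r1+r2+r3)" by simp
  have "b = (r1^2+r1*r2+r2^2 + a*(r1+r2) + b) - (r1^2+r1*r2+r2^2 + a*(r1+r2))" by simp
  also have "\<dots> = - (r1^2+r1*r2+r2^2 + a*(r1+r2))" using e12 by simp
  also have "\<dots> = r1*r2 + r2*r3 + r3*r1" unfolding A by (simp add: algebra_simps power2_eq_square)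
  finally have B: "b = r1*r2 + r2*r3 + r3*r1" .
  have "c = (r1^3 + a*r1^2 + b*r1 + c) - (r1^3 + a*r1^2 + b*r1)" by simp
  also have "\<dots> = - (r1^3 + a*r1^2 + b*r1)" using assms(4) by simp
  also have "\<dots> = -(r1*r2*r3)" unfolding A B by (simp add: algebra_simps power2_eq_square power3_eq_cube)
  finally have C: "c = -(r1*r2*r3)" .
  show ?thesis unfolding A B C by (simp add: algebra_simps power2_eq_square power3_eq_cube)
qed

lemma key_identity:
  fixes P Q V U La T S W R th :: "'a::field_char_0"
  assumes cub: "th^3 + P*th + Q = 0" and P0: "P \<noteq> 0"
    and disc: "81*P^2*V^2 = -4*P^3 - 27*Q^2"
    and U: "U = -3*Q/P" and La: "La*(U - 13*V) = 14"
    and T: "T = 7*La*V" and S: "S = T^2+13*T+49" and R: "R = 28*T*La*th - 49*S"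
  shows "R^3 + 147*S*R^2 + 147*S*(33*T^2+637*T+2401)*R
     + 49*S*(881*T^4+38122*T^3+525819*T^2+3058874*T+5764801) = 0"
proof -
  define W where "W = La*th"
  have e1: "R^3 + 147*S*R^2 + 147*S*(33*T^2+637*T+2401)*R
     + 49*S*(881*T^4+38122*T^3+525819*T^2+3058874*T+5764801)
     = 21952*T^3*(W^3 - 3*S*W + S*(La*U))"
  proof -
    have E: "R^3 + 147*S*R^2 + 147*S*(33*T^2+637*T+2401)*R
     + 49*S*(881*T^4+38122*T^3+525819*T^2+3058874*T+5764801)
     = 21952*T^3*(W^3 - 3*S*W + S*(13*T+98)/7)"
      unfolding R S W_def by (simp add: field_simps) algebra
    have "La*U = 13*La*V + 14" using La by (simp add: algebra_simps)
    also have "\<dots> = (13*T+98)/7" using T by simp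
    finally have LU: "La*U = (13*T+98)/7" .
    show ?thesis unfolding LU E by simp
  qed
  have UP: "Q = -(U*P)/3" using U P0 by simp
  have "P^2*(81*V^2 + 4*P + 3*U^2) = 0"
    using disc unfolding UP by (simp add: algebra_simps power2_eq_square power3_eq_cube)
  then have e3: "81*V^2 + 4*P + 3*U^2 = 0" using P0 by simp
  have e4: "S = La^2*(-P/3)"
  proof -
    have LU: "La*U = 13*(La*V) + 14" using La by (simp add: algebra_simps)
    have "4*P = 4*P - (81*V^2 + 4*P + 3*U^2)" using e3 by simp
    then have P4: "4*P = -(81*V^2+3*U^2)" by (simp add: algebra_simps)
    have "La^2*(-P/3) = La^2*(-(4*P))/12" by simp
    also have "\<dots> = (27*(La*V)^2 + (La*U)^2)/4"
      unfolding P4 by (simp add: field_simps power2_eq_square)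
    finally have "La^2*(-P/3) = (27*(La*V)^2 + (La*U)^2)/4" .
    also have "\<dots> = 49*(La*V)^2 + 91*(La*V) + 49" unfolding LU
      by (simp add: field_simps power2_eq_square)
    also have "\<dots> = S" unfolding S T by (simp add: power2_eq_square algebra_simps)
    finally show ?thesis by simp
  qed
  have "W^3 - 3*S*W + S*(La*U) = La^3*(th^3 + P*th + Q)"
    unfolding e4 W_def UP using P0 by (simp add: field_simps power2_eq_square power3_eq_cube)
  then show ?thesis using e1 cub by simp
qed

lemma g_eval:
  "poly (map_poly of_rat (g_poly t)) (z::complex) =
     z^3 + of_rat (147*(t^2+13*t+49)) * z^2 + of_rat (147*(t^2+13*t+49)*(33*t^2+637*t+2401)) * z
     + of_rat (49*(t^2+13*t+49)*(881*t^4+38122*t^3+525819*t^2+3058874*t+5764801))"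
  unfolding g_poly_def Let_def by (simp add: map_poly_pCons algebra_simps power2_eq_square power3_eq_cube)


section \<open>Cyclic cubic setting\<close>

locale cyc_aut =
  fixes L :: "complex set" and \<sigma> :: "complex \<Rightarrow> complex"
  assumes aut: "\<sigma> \<in> Aut_C L"
begin

lemma A1: "bij_betw \<sigma> L L"
  using aut unfolding Aut_C_def mem_Collect_eq by (elim conjE) assumption
lemma A2: "\<forall>x\<in>L. \<forall>y\<in>L. \<sigma> (x + y) = \<sigma> x + \<sigma> y \<and> \<sigma> (x * y) = \<sigma> x * \<sigma> y"
  using aut unfolding Aut_C_def mem_Collect_eq by (elim conjE) assumption
lemma A3: "\<sigma> 1 = 1"
  using aut unfolding Aut_C_def mem_Collect_eq by (elim conjE) assumption
lemma A4: "\<forall>x. x \<notin> L \<longrightarrow> \<sigma> x = x"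
  using aut unfolding Aut_C_def mem_Collect_eq by (elim conjE) assumption
lemmas A = A1 A2 A3 A4

lemma bij: "bij_betw \<sigma> L L" by (rule A(1))
lemma sig_L: "x \<in> L \<Longrightarrow> \<sigma> x \<in> L" using bij by (rule bij_betw_apply)
lemma sig_inj: "x \<in> L \<Longrightarrow> y \<in> L \<Longrightarrow> \<sigma> x = \<sigma> y \<Longrightarrow> x = y"
  using bij unfolding bij_betw_def inj_on_def by blast
lemma sig_add: "x \<in> L \<Longrightarrow> y \<in> L \<Longrightarrow> \<sigma> (x + y) = \<sigma> x + \<sigma> y"
  using A(2) by blast
lemma sig_mult: "x \<in> L \<Longrightarrow> y \<in> L \<Longrightarrow> \<sigma> (x * y) = \<sigma> x * \<sigma> y"
  using A(2) by blast
lemma sig_one: "\<sigma> 1 = 1" by (rule A(3))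
lemma sig_out: "x \<notin> L \<Longrightarrow> \<sigma> x = x" using A(4) by blast
end

locale cyc = cyc_aut +
  assumes sub: "subfield_C L" and dim: "Q_dim L 3"
    and nid: "\<sigma> \<noteq> id" and cube: "\<sigma> \<circ> \<sigma> \<circ> \<sigma> = id"
begin

lemma sig3: "\<sigma> (\<sigma> (\<sigma> x)) = x" using fun_cong[OF cube, of x] by simp

lemma L0: "0 \<in> L" and L1: "1 \<in> L" and Ladd: "x \<in> L \<Longrightarrow> y \<in> L \<Longrightarrow> x + y \<in> L"
  and Lmult: "x \<in> L \<Longrightarrow> y \<in> L \<Longrightarrow> x * y \<in> L" and Lminus: "x \<in> L \<Longrightarrow> - x \<in> L"
  and Linv: "x \<in> L \<Longrightarrow> inverse x \<in> L" and Ldiff: "x \<in> L \<Longrightarrow> y \<in> L \<Longrightarrow> x - y \<in> L"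
  and Ldiv: "x \<in> L \<Longrightarrow> y \<in> L \<Longrightarrow> x / y \<in> L" and Lrat: "of_rat q \<in> L"
  and Lpow: "x \<in> L \<Longrightarrow> x ^ n \<in> L"
  using sf_basic[OF sub] sf_diff[OF sub] sf_divide[OF sub] sf_of_rat[OF sub] sf_power[OF sub] by auto

lemmas Lc = L0 L1 Ladd Lmult Lminus Linv Ldiff Ldiv Lrat Lpow

lemma sig_zero: "\<sigma> 0 = 0"
  using sig_add[of 0 0] Lc(1) by simp

lemma sig_minus: "x \<in> L \<Longrightarrow> \<sigma> (- x) = - \<sigma> x"
proof -
  assume x: "x \<in> L"
  have "\<sigma> x + \<sigma> (-x) = 0" using sig_add[of x "-x"] Lc(5)[OF x] x sig_zero by simp
  then show ?thesis by (simp add: add_eq_0_iff)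
qed

lemma sig_diff: "x \<in> L \<Longrightarrow> y \<in> L \<Longrightarrow> \<sigma> (x - y) = \<sigma> x - \<sigma> y"
  using sig_add[of x "-y"] sig_minus[of y] Lc(5)[of y] by simp

lemma sig_inverse: "x \<in> L \<Longrightarrow> \<sigma> (inverse x) = inverse (\<sigma> x)"
proof (cases "x = 0")
  case True then show ?thesis by (simp add: sig_zero)
next
  case False
  assume x: "x \<in> L"
  have "\<sigma> (inverse x) * \<sigma> x = 1" using sig_mult[OF Lc(6)[OF x] x] False sig_one by simp
  then have "\<sigma> x * \<sigma> (inverse x) = 1" by (simp add: mult.commute)
  then show ?thesis by (rule inverse_unique[symmetric])
qed

lemma sig_divide: "x \<in> L \<Longrightarrow> y \<in> L \<Longrightarrow> \<sigma> (x / y) = \<sigma> x / \<sigma> y"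
  using sig_mult[of x "inverse y"] sig_inverse[of y] Lc(6)[of y] by (simp add: divide_inverse)

lemma sig_nat: "\<sigma> (of_nat n) = of_nat n"
proof (induction n)
  case 0 then show ?case by (simp add: sig_zero)
next
  case (Suc n)
  then show ?case using sig_add[OF sf_of_nat[OF sub] Lc(2), of n] sig_one by (simp add: add.commute)
qed

lemma sig_int: "\<sigma> (of_int n) = of_int n"
proof (cases "n \<ge> 0")
  case True then show ?thesis using sig_nat[of "nat n"] by simp
next
  case False then show ?thesis using sig_nat[of "nat (-n)"] sig_minus[OF sf_of_nat[OF sub], of "nat (-n)"] by simp
qed

lemma sig_rat: "\<sigma> (of_rat q) = of_rat q"
proof -
  obtain a b where "q = Fract a b" "b > 0" by (cases q) auto
  then have e: "of_rat q = (of_int a / of_int b :: complex)" by (simp add: of_rat_rat)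
  show ?thesis unfolding e using sig_divide[OF sf_of_int[OF sub] sf_of_int[OF sub], of a b] sig_int by simp
qed

lemma sig_smult: "x \<in> L \<Longrightarrow> \<sigma> (of_rat q * x) = of_rat q * \<sigma> x"
  using sig_mult[OF Lrat] sig_rat by simp

lemma moved: "\<exists>y\<in>L. \<sigma> y \<noteq> y"
proof (rule ccontr)
  assume "\<not> ?thesis"
  then have "\<sigma> = id" using sig_out by (intro ext) (metis id_apply)
  then show False using nid by simp
qed

lemma rat_in_L: "x \<in> \<rat> \<Longrightarrow> x \<in> L" by (auto elim!: Rats_cases intro: Lrat)

lemma fixed_rat:
  assumes x: "x \<in> L" and fx: "\<sigma> x = x"
  shows "x \<in> \<rat>"
proof (rule ccontr)
  assume nx: "x \<notin> \<rat>"
  have "\<sigma> y = y" if y: "y \<in> L" for y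
  proof (rule ccontr)
    assume ny: "\<sigma> y \<noteq> y"
    have xy: "x * y \<in> L" using x y Lc(4) by blast
    obtain c1 c2 c3 c4 :: rat where nz: "c1 \<noteq> 0 \<or> c2 \<noteq> 0 \<or> c3 \<noteq> 0 \<or> c4 \<noteq> 0"
      and eq0: "of_rat c1 * 1 + of_rat c2 * x + of_rat c3 * y + of_rat c4 * (x * y) = 0"
      using dep4[OF dim Lc(2) x y xy] by blast
    have eq: "of_rat c1 + of_rat c2 * x + (of_rat c3 + of_rat c4 * x) * y = 0"
      using eq0 by (simp add: algebra_simps)
    have "\<sigma> (of_rat c1 + of_rat c2 * x + (of_rat c3 + of_rat c4 * x) * y) = 0" using eq sig_zero by simp
    moreover have "\<sigma> (of_rat c1 + of_rat c2 * x + (of_rat c3 + of_rat c4 * x) * y)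
       = of_rat c1 + of_rat c2 * x + (of_rat c3 + of_rat c4 * x) * \<sigma> y"
      using x y fx by (simp add: sig_add sig_mult sig_smult sig_rat Lc)
    ultimately have eq': "of_rat c1 + of_rat c2 * x + (of_rat c3 + of_rat c4 * x) * \<sigma> y = 0" by simp
    have "(of_rat c3 + of_rat c4 * x) * (y - \<sigma> y) = (of_rat c1 + of_rat c2 * x + (of_rat c3 + of_rat c4 * x) * y) - (of_rat c1 + of_rat c2 * x + (of_rat c3 + of_rat c4 * x) * \<sigma> y)"
      by (simp add: algebra_simps)
    then have "(of_rat c3 + of_rat c4 * x) * (y - \<sigma> y) = 0" using eq eq' by simp
    then have c34: "of_rat c3 + of_rat c4 * x = (0::complex)" using ny by simp
    have ratx: "c = 0" if "of_rat a + of_rat c * x = (0::complex)" for a c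
    proof (rule ccontr)
      assume "c \<noteq> 0"
      have "of_rat c * x = - (of_rat a :: complex)" using that by (simp add: eq_neg_iff_add_eq_0 add.commute)
      then have "x = of_rat (- a / c)" using \<open>c \<noteq> 0\<close> by (simp add: of_rat_divide of_rat_minus field_simps)
      then show False using nx by simp
    qed
    have "c4 = 0" using ratx[OF c34] .
    then have "c3 = 0" using c34 by simp
    have "of_rat c1 + of_rat c2 * x = (0::complex)" using eq \<open>c3 = 0\<close> \<open>c4 = 0\<close> by simp
    then have "c2 = 0" using ratx by blast
    then have "c1 = 0" using \<open>of_rat c1 + of_rat c2 * x = 0\<close> by simp
    then show False using nz \<open>c2 = 0\<close> \<open>c3 = 0\<close> \<open>c4 = 0\<close> by simp
  qed
  then have "\<sigma> = id" using sig_out by (intro ext) (metis id_apply)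
  then show False using nid by simp
qed

end


context cyc begin

lemma sig_pow: "x \<in> L \<Longrightarrow> \<sigma> (x ^ n) = \<sigma> x ^ n"
  by (induction n) (simp_all add: sig_one sig_mult Lpow)

lemma rat_obtain: assumes "x \<in> L" "\<sigma> x = x" obtains q where "x = of_rat q"
  using fixed_rat[OF assms] by (auto elim: Rats_cases)

lemma theta_exists:
  obtains th1 th2 th3 where "th1 \<in> L" "th2 \<in> L" "th3 \<in> L"
    "\<sigma> th1 = th2" "\<sigma> th2 = th3" "\<sigma> th3 = th1" "th1 + th2 + th3 = 0"
    "th1 \<noteq> th2" "th2 \<noteq> th3" "th1 \<noteq> th3"
proof -
  obtain y where y: "y \<in> L" "\<sigma> y \<noteq> y" using moved by blast
  define y2 where "y2 = \<sigma> y"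
  define y3 where "y3 = \<sigma> y2"
  have y2L: "y2 \<in> L" and y3L: "y3 \<in> L" unfolding y2_def y3_def using y sig_L by auto
  have sy3: "\<sigma> y3 = y" unfolding y3_def y2_def by (rule sig3)
  define Tr where "Tr = y + y2 + y3"
  have TrL: "Tr \<in> L" unfolding Tr_def using y y2L y3L by (simp add: Ladd)
  have sTr: "\<sigma> Tr = Tr" unfolding Tr_def using y y2L y3L sy3
    by (simp add: sig_add Ladd y2_def[symmetric] y3_def[symmetric] algebra_simps)
  have L3: "(3::complex) \<in> L" using Lrat[of 3] by simp
  have s3: "\<sigma> 3 = (3::complex)" using sig_rat[of 3] by simp
  have sT3: "\<sigma> (Tr / 3) = Tr / 3" using sig_divide[OF TrL L3] sTr s3 by simp
  have T3L: "Tr / 3 \<in> L" using Ldiv[OF TrL L3] .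
  define th1 where "th1 = y - Tr/3"
  define th2 where "th2 = y2 - Tr/3"
  define th3 where "th3 = y3 - Tr/3"
  show ?thesis
  proof (rule that[of th1 th2 th3])
    show "th1 \<in> L" "th2 \<in> L" "th3 \<in> L" unfolding th1_def th2_def th3_def
      using y y2L y3L T3L by (simp_all add: Ldiff)
    show "\<sigma> th1 = th2" unfolding th1_def th2_def using sig_diff[OF y(1) T3L] sT3 y2_def by simp
    show "\<sigma> th2 = th3" unfolding th2_def th3_def using sig_diff[OF y2L T3L] sT3 y3_def by simp
    show "\<sigma> th3 = th1" unfolding th3_def th1_def using sig_diff[OF y3L T3L] sT3 sy3 by simp
    show "th1 + th2 + th3 = 0" unfolding th1_def th2_def th3_def Tr_def by (simp add: field_simps)
    show "th1 \<noteq> th2" unfolding th1_def th2_def using y(2) y2_def by auto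
    have "y2 \<noteq> y3"
    proof
      assume "y2 = y3"
      then have "\<sigma> y = \<sigma> y2" unfolding y3_def y2_def by simp
      then have "y = y2" using sig_inj[OF y(1) y2L] by simp
      then show False using y(2) y2_def by simp
    qed
    then show "th2 \<noteq> th3" unfolding th2_def th3_def by simp
    have "y \<noteq> y3"
    proof
      assume "y = y3"
      then have "\<sigma> y = y" using sy3 by simp
      then show False using y(2) by simp
    qed
    then show "th1 \<noteq> th3" unfolding th1_def th3_def by simp
  qed
qed

end


context cyc begin

lemma param:
  obtains th1 th2 th3 p q d where "th1 \<in> L" "th2 \<in> L" "th3 \<in> L"
    "\<sigma> th1 = th2" "\<sigma> th2 = th3" "\<sigma> th3 = th1"
    "th1 \<noteq> th2" "th2 \<noteq> th3" "th1 \<noteq> th3"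
    "th1^3 + of_rat p * th1 + of_rat q = 0" "th2^3 + of_rat p * th2 + of_rat q = 0"
    "th3^3 + of_rat p * th3 + of_rat q = 0"
    "p \<noteq> 0" "d \<noteq> 0" "d^2 = -4*p^3 - 27*q^2"
proof -
  obtain th1 th2 th3 where th: "th1 \<in> L" "th2 \<in> L" "th3 \<in> L"
    "\<sigma> th1 = th2" "\<sigma> th2 = th3" "\<sigma> th3 = th1" "th1 + th2 + th3 = 0"
    "th1 \<noteq> th2" "th2 \<noteq> th3" "th1 \<noteq> th3" by (rule theta_exists)
  have th3e: "th3 = - th1 - th2" using th(7) by (simp add: eq_neg_iff_add_eq_0 algebra_simps)
  define P where "P = th1*th2 + th2*th3 + th3*th1"
  define Q where "Q = - (th1*th2*th3)"
  define D where "D = (th1 - th2)*(th2 - th3)*(th3 - th1)"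
  have PL: "P \<in> L" unfolding P_def using th by (simp add: Ladd Lmult)
  have QL: "Q \<in> L" unfolding Q_def using th by (simp add: Lminus Lmult)
  have DL: "D \<in> L" unfolding D_def using th by (simp add: Ldiff Lmult)
  have sP: "\<sigma> P = P" unfolding P_def using th by (simp add: sig_add sig_mult Ladd Lmult)
  have sQ: "\<sigma> Q = Q" unfolding Q_def using th by (simp add: sig_minus sig_mult Lminus Lmult)
  have sD: "\<sigma> D = D" unfolding D_def using th by (simp add: sig_diff sig_mult Ldiff Lmult)
  obtain p where p: "P = of_rat p" using rat_obtain[OF PL sP] .
  obtain q where q: "Q = of_rat q" using rat_obtain[OF QL sQ] .
  obtain d where d: "D = of_rat d" using rat_obtain[OF DL sD] .
  have c1: "th1^3 + P * th1 + Q = 0" unfolding P_def Q_def th3e by (simp add: algebra_simps power3_eq_cube)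
  have c2: "th2^3 + P * th2 + Q = 0" unfolding P_def Q_def th3e by (simp add: algebra_simps power3_eq_cube)
  have c3: "th3^3 + P * th3 + Q = 0" unfolding P_def Q_def th3e by (simp add: algebra_simps power3_eq_cube power2_eq_square)
  have disc: "D^2 = -4*P^3 - 27*Q^2" unfolding P_def Q_def D_def th3e
    by (simp add: algebra_simps power3_eq_cube power2_eq_square)
  have "D \<noteq> 0" unfolding D_def using th by simp
  then have d0: "d \<noteq> 0" using d by simp
  have th10: "th1 \<noteq> 0"
  proof
    assume "th1 = 0"
    then have "th2 = 0" using th(4) sig_zero by simp
    then show False using th(8) \<open>th1 = 0\<close> by simp
  qed
  have th20: "th2 \<noteq> 0"
  proof
    assume "th2 = 0"
    then have "th3 = 0" using th(5) sig_zero by simp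
    then show False using th(9) \<open>th2 = 0\<close> by simp
  qed
  have "P \<noteq> 0"
  proof
    assume P0: "P = 0"
    define z where "z = th2 / th1"
    have zL: "z \<in> L" unfolding z_def using th by (simp add: Ldiv)
    have "P = -(th1^2 + th1*th2 + th2^2)" unfolding P_def th3e
      by (simp add: algebra_simps power2_eq_square)
    then have E: "th1^2 + th1*th2 + th2^2 = 0" using P0 by (metis neg_equal_0_iff_equal)
    have zz: "z^2 + z + 1 = 0"
    proof -
      have "z^2 + z + 1 = (th1^2 + th1*th2 + th2^2) / th1^2" unfolding z_def using th10
        by (simp add: field_simps power2_eq_square)
      then show ?thesis using E by simp
    qed
    have "th3 * th1 - th2 * th2 = -(th1^2 + th1*th2 + th2^2)" unfolding th3e
      by (simp add: algebra_simps power2_eq_square)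
    then have "th3 * th1 - th2 * th2 = 0" using E by (metis neg_equal_0_iff_equal)
    then have "th3 * th1 = th2 * th2" by (simp only: right_minus_eq)
    then have "th3 / th2 = z" unfolding z_def using th10 th20 by (simp add: field_simps)
    then have sz: "\<sigma> z = z" unfolding z_def using sig_divide[OF th(2) th(1)] th by simp
    obtain w where w: "z = of_rat w" using rat_obtain[OF zL sz] .
    have "of_rat (w^2 + w + 1) = (0::complex)" using zz unfolding w by (simp add: of_rat_add of_rat_power)
    then have w0: "w^2 + w + 1 = 0" by (simp only: of_rat_eq_0_iff)
    have "0 \<le> (w + 1/2)^2" by simp
    moreover have "(w + 1/2)^2 = w^2 + w + 1 - 3/4" by (simp add: power2_eq_square field_simps)
    ultimately show False using w0 by simp
  qed
  then have p0: "p \<noteq> 0" using p by simp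
  have "of_rat (d^2) = (of_rat (-4*p^3 - 27*q^2) :: complex)"
    using disc unfolding p q d by (simp add: of_rat_add of_rat_diff of_rat_mult of_rat_power of_rat_minus)
  then have dq: "d^2 = -4*p^3 - 27*q^2" by (simp only: of_rat_eq_iff)
  show ?thesis
    by (rule that[of th1 th2 th3 p q d]) (use th c1 c2 c3 p q p0 d0 dq in auto)
qed

end


context cyc begin

lemma main: "\<exists>t :: rat. L = splitting_field_Q (g_poly t)"
proof -
  obtain th1 th2 th3 p q d where th: "th1 \<in> L" "th2 \<in> L" "th3 \<in> L"
    "\<sigma> th1 = th2" "\<sigma> th2 = th3" "\<sigma> th3 = th1"
    "th1 \<noteq> th2" "th2 \<noteq> th3" "th1 \<noteq> th3"
    and cub: "th1^3 + of_rat p * th1 + of_rat q = 0" "th2^3 + of_rat p * th2 + of_rat q = 0"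
    "th3^3 + of_rat p * th3 + of_rat q = 0"
    and p0: "p \<noteq> 0" and d0: "d \<noteq> 0" and dq: "d^2 = -4*p^3 - 27*q^2"
    by (rule param)
  define u where "u = -3*q/p"
  define v0 where "v0 = d/(9*p)"
  have v00: "v0 \<noteq> 0" unfolding v0_def using p0 d0 by simp
  obtain v where vv: "v = v0 \<or> v = -v0" and uv: "u - 13*v \<noteq> 0"
  proof (cases "u - 13*v0 = 0")
    case True
    then have "u - 13*(-v0) \<noteq> 0" using v00 by simp
    then show ?thesis using that by blast
  next
    case False then show ?thesis using that by blast
  qed
  have v0: "v \<noteq> 0" using vv v00 by auto
  have vsq: "v^2 = v0^2" using vv by auto
  have disc: "81*p^2*v^2 = -4*p^3 - 27*q^2" unfolding vsq v0_def using p0 dq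
    by (simp add: power2_eq_square field_simps)
  define la where "la = 14/(u - 13*v)"
  have la0: "la \<noteq> 0" unfolding la_def using uv by simp
  have laeq: "la*(u - 13*v) = 14" using nonzero_eq_divide_eq[OF uv, of la 14] la_def by blast
  define t where "t = 7*la*v"
  have t0: "t \<noteq> 0" unfolding t_def using la0 v0 by simp
  define s where "s = t^2 + 13*t + 49"
  define k where "k = 28*t*la"
  have k0: "k \<noteq> 0" unfolding k_def using t0 la0 by simp
  define r1 where "r1 = of_rat k * th1 - of_rat (49*s)"
  define r2 where "r2 = of_rat k * th2 - of_rat (49*s)"
  define r3 where "r3 = of_rat k * th3 - of_rat (49*s)"
  let ?g = "map_poly (of_rat :: rat \<Rightarrow> complex) (g_poly t)"
  define a where "a = (of_rat (147*s) :: complex)"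
  define b where "b = (of_rat (147*s*(33*t^2+637*t+2401)) :: complex)"
  define c where "c = (of_rat (49*s*(881*t^4+38122*t^3+525819*t^2+3058874*t+5764801)) :: complex)"
  have geval: "poly ?g z = z^3 + a*z^2 + b*z + c" for z
    unfolding g_eval a_def b_def c_def s_def by (simp add: algebra_simps)
  have root: "poly ?g (of_rat k * th - of_rat (49*s)) = 0" if "th^3 + of_rat p * th + of_rat q = 0" for th
  proof -
    have "(of_rat k * th - of_rat (49*s))^3 + 147*of_rat s*(of_rat k * th - of_rat (49*s))^2
      + 147*of_rat s*(33*of_rat t^2+637*of_rat t+2401)*(of_rat k * th - of_rat (49*s))
      + 49*of_rat s*(881*of_rat t^4+38122*of_rat t^3+525819*of_rat t^2+3058874*of_rat t+5764801) = (0::complex)"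
    proof (rule key_identity[of th "of_rat p" "of_rat q" "of_rat v" "of_rat u" "of_rat la"])
      show "th^3 + of_rat p * th + of_rat q = 0" by fact
      show "of_rat p \<noteq> (0::complex)" using p0 by simp
      show "81 * (of_rat p)^2 * (of_rat v)^2 = -4 * (of_rat p)^3 - 27 * (of_rat q :: complex)^2"
        using arg_cong[OF disc, of "of_rat :: rat \<Rightarrow> complex"]
        by (simp add: of_rat_mult of_rat_add of_rat_diff of_rat_power of_rat_minus)
      show "of_rat u = -3 * of_rat q / (of_rat p :: complex)" unfolding u_def
        by (simp add: of_rat_divide of_rat_mult of_rat_minus)
      show "of_rat la * (of_rat u - 13 * of_rat v) = (14::complex)"
        using arg_cong[OF laeq, of "of_rat :: rat \<Rightarrow> complex"]
        by (simp add: of_rat_mult of_rat_diff)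
      show "of_rat t = 7 * of_rat la * (of_rat v :: complex)" unfolding t_def by (simp add: of_rat_mult)
      show "of_rat s = (of_rat t)^2 + 13 * of_rat t + (49::complex)" unfolding s_def
        by (simp add: of_rat_mult of_rat_add of_rat_power)
      show "of_rat k * th - of_rat (49 * s) = 28 * of_rat t * of_rat la * th - 49 * (of_rat s :: complex)"
        unfolding k_def by (simp add: of_rat_mult)
    qed
    then show ?thesis unfolding geval a_def b_def c_def
      by (simp add: of_rat_mult of_rat_add of_rat_power)
  qed
  have R1: "poly ?g r1 = 0" unfolding r1_def using root cub(1) by blast
  have R2: "poly ?g r2 = 0" unfolding r2_def using root cub(2) by blast
  have R3: "poly ?g r3 = 0" unfolding r3_def using root cub(3) by blast
  have dist: "r1 \<noteq> r2" "r2 \<noteq> r3" "r1 \<noteq> r3" unfolding r1_def r2_def r3_def using th(7-9) k0 by auto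
  have rL: "r1 \<in> L" "r2 \<in> L" "r3 \<in> L" unfolding r1_def r2_def r3_def using th(1-3)
    by (simp_all add: Ldiff Lmult Lrat)
  have sr: "\<sigma> r1 = r2" "\<sigma> r2 = r3" unfolding r1_def r2_def r3_def using th
    by (simp_all add: sig_diff sig_smult sig_rat Lmult Lrat)
  have roots: "{z. poly ?g z = 0} \<subseteq> L"
  proof
    fix z assume "z \<in> {z. poly ?g z = 0}"
    then have "z^3 + a*z^2 + b*z + c = 0" using geval by simp
    moreover have "z^3 + a*z^2 + b*z + c = (z - r1)*(z - r2)*(z - r3)"
      by (rule cubic_factor) (use dist R1 R2 R3 geval in auto)
    ultimately have "z = r1 \<or> z = r2 \<or> z = r3" by simp
    then show "z \<in> L" using rL by auto
  qed
  have LK: "L \<subseteq> K" if K: "subfield_C K" "{z. poly ?g z = 0} \<subseteq> K" for K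
  proof
    fix z assume z: "z \<in> L"
    have r1K: "r1 \<in> K" using K(2) R1 by auto
    obtain c1 c2 c3 c4 :: rat where nz: "c1 \<noteq> 0 \<or> c2 \<noteq> 0 \<or> c3 \<noteq> 0 \<or> c4 \<noteq> 0"
      and rel: "of_rat c1 * 1 + of_rat c2 * r1 + of_rat c3 * r1^2 + of_rat c4 * z = 0"
      using dep4[OF dim L1 rL(1) Lpow[OF rL(1)] z] by blast
    show "z \<in> K"
    proof (cases "c4 = 0")
      case True
      define F where "F = (\<lambda>x. of_rat c1 + of_rat c2 * x + of_rat c3 * x^2 :: complex)"
      have F1: "F r1 = 0" using rel True unfolding F_def by simp
      have sF: "\<sigma> (F x) = F (\<sigma> x)" if "x \<in> L" for x
        unfolding F_def using that by (simp add: sig_add sig_smult sig_rat sig_pow Ladd Lmult Lrat Lpow)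
      have F2: "F r2 = 0" using sF[OF rL(1)] F1 sr sig_zero by simp
      have F3: "F r3 = 0" using sF[OF rL(2)] F2 sr sig_zero by simp
      have "of_rat c1 = (0::complex) \<and> of_rat c2 = (0::complex) \<and> of_rat c3 = (0::complex)"
        by (rule vander3[OF dist(1) dist(2) dist(3)]) (use F1 F2 F3 in \<open>simp_all add: F_def\<close>)
      then show ?thesis using nz True by simp
    next
      case False
      have "of_rat c4 * z + (of_rat c1 + of_rat c2 * r1 + of_rat c3 * r1^2) = 0"
        using rel by (simp add: algebra_simps)
      then have "of_rat c4 * z = - (of_rat c1 + of_rat c2 * r1 + of_rat c3 * r1^2)"
        by (simp only: eq_neg_iff_add_eq_0)
      then have "z = - (of_rat c1 + of_rat c2 * r1 + of_rat c3 * r1^2) / of_rat c4"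
        using False by (simp add: field_simps)
      moreover have "- (of_rat c1 + of_rat c2 * r1 + of_rat c3 * r1^2) / of_rat c4 \<in> K"
        using K(1) r1K by (intro sf_divide sf_basic sf_of_rat sf_power) auto
      ultimately show ?thesis by simp
    qed
  qed
  have "L = splitting_field_Q (g_poly t)"
    unfolding splitting_field_Q_def
  proof
    show "L \<subseteq> \<Inter>{K. subfield_C K \<and> {z. poly ?g z = 0} \<subseteq> K}" using LK by blast
    show "\<Inter>{K. subfield_C K \<and> {z. poly ?g z = 0} \<subseteq> K} \<subseteq> L" using sub roots by blast
  qed
  then show ?thesis by blast
qed

end


lemma Aut_id: "id \<in> Aut_C L"
  unfolding Aut_C_def by (simp add: bij_betw_id)

lemma Aut_comp: assumes s: "s \<in> Aut_C L" and t: "t \<in> Aut_C L" shows "s \<circ> t \<in> Aut_C L"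
proof -
  interpret S: cyc_aut L s using s by unfold_locales
  interpret T: cyc_aut L t using t by unfold_locales
  show ?thesis unfolding Aut_C_def mem_Collect_eq
  proof (intro conjI ballI allI impI)
    show "bij_betw (s \<circ> t) L L" using bij_betw_trans[OF T.bij S.bij] .
    fix x y assume x: "x \<in> L" and y: "y \<in> L"
    show "(s \<circ> t) (x + y) = (s \<circ> t) x + (s \<circ> t) y"
      using x y by (simp add: S.sig_add T.sig_add T.sig_L)
    show "(s \<circ> t) (x * y) = (s \<circ> t) x * (s \<circ> t) y"
      using x y by (simp add: S.sig_mult T.sig_mult T.sig_L)
  next
    show "(s \<circ> t) 1 = 1" by (simp add: S.sig_one T.sig_one)
  next
    fix x assume "x \<notin> L" then show "(s \<circ> t) x = x" by (simp add: S.sig_out T.sig_out)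
  qed
qed

theorem lemma4p9:
  fixes L :: "complex set"
  assumes "galois_over_Q L"
    and "Gal_C L \<cong> integer_mod_group 3"
  shows "\<exists>t :: rat. L = splitting_field_Q (g_poly t)"
proof -
  from assms(2) obtain h where h: "h \<in> iso (Gal_C L) (integer_mod_group 3)" unfolding is_iso_def by blast
  have hom: "h \<in> hom (Gal_C L) (integer_mod_group 3)" using h unfolding iso_def by simp
  have cG: "carrier (Gal_C L) = Aut_C L" by (simp add: Gal_C_def)
  have cH: "carrier (integer_mod_group 3) = {0..<3}" by (simp add: carrier_integer_mod_group)
  have bij: "bij_betw h (Aut_C L) {0..<3}" using h unfolding iso_def cG cH by simp
  have hm: "h (s \<circ> t) = (h s + h t) mod 3" if "s \<in> Aut_C L" "t \<in> Aut_C L" for s t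
  proof -
    have "h (s \<otimes>\<^bsub>Gal_C L\<^esub> t) = h s \<otimes>\<^bsub>integer_mod_group 3\<^esub> h t"
      using hom_mult[OF hom, of s t] that cG by simp
    then show ?thesis by (simp add: Gal_C_def)
  qed
  have cardA: "card (Aut_C L) = 3" using bij_betw_same_card[OF bij] by (simp del: atLeastLessThan_iff)
  have sub: "subfield_C L" using assms(1) unfolding galois_over_Q_def by (elim conjE)
  obtain n where n: "Q_dim L n" "card (Aut_C L) = n"
    using assms(1) unfolding galois_over_Q_def by (elim conjE exE) (rule that)
  have dim: "Q_dim L 3" using n cardA by simp
  have hrange: "h x \<in> {0..<3}" if "x \<in> Aut_C L" for x using bij_betw_apply[OF bij that] .
  have hid: "h id = 0"
  proof -
    have "h id = (h id + h id) mod 3" using hm[OF Aut_id Aut_id] by simp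
    moreover have "h id = 0 \<or> h id = 1 \<or> h id = 2" using hrange[OF Aut_id] by auto
    ultimately show ?thesis by auto
  qed
  have "1 \<in> h ` Aut_C L" using bij_betw_imp_surj_on[OF bij] by simp
  then obtain \<sigma> where hs': "1 = h \<sigma>" and sA: "\<sigma> \<in> Aut_C L" by (rule imageE)
  have hs: "h \<sigma> = 1" using hs' by simp
  have s2A: "\<sigma> \<circ> \<sigma> \<in> Aut_C L" using Aut_comp[OF sA sA] .
  have s3A: "\<sigma> \<circ> \<sigma> \<circ> \<sigma> \<in> Aut_C L" using Aut_comp[OF s2A sA] .
  have "h (\<sigma> \<circ> \<sigma> \<circ> \<sigma>) = 0" using hm[OF s2A sA] hm[OF sA sA] hs by simp
  then have cube: "\<sigma> \<circ> \<sigma> \<circ> \<sigma> = id"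
    using inj_onD[OF bij_betw_imp_inj_on[OF bij] _ s3A Aut_id] hid by simp
  have nid: "\<sigma> \<noteq> id" using hs hid by auto
  interpret cyc L \<sigma> using sub dim sA nid cube by unfold_locales
  show ?thesis by (rule main)
qed

end
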